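(* Let $N\ge1$, $1\le n\le N$, and let $x,y$ and $x_1,\dots,x_N$ be integers with $0\le x_1\le\cdots\le x_N\le x+y$, $x_n=x$; set $y_n=y$. Let $R>0$ and let $F$ be analytic on $\{|w|\ge R\}$ with $|F(w)|\to0$ uniformly as $|w|\to\infty$. Then $$\sum_{y_N=0}^{x+y-x_N}\sum_{y_{N-1}=y_N}^{x+y-x_{N-1}}\cdots\sum_{y_{n+1}=y_{n+2}}^{x+y-x_{n+1}}\ \sum_{y_{n-1}=y}^{x+y-x_{n-1}}\cdots\sum_{y_1=y_2}^{x+y-x_1}\det\Big[\int_{|w|=R}(w+1)^{y_j}w^{-j+i}F(w)\frac{dw}{2\pi i}\Big]_{i,j=1}^N$$ $$=\det\Big[\int_{|w|=R}(w+1)^{x+y-x_j+\mathbf 1_{j\ne n}}w^{-j+i-\mathbf 1_{j\ne n}}F(w)\frac{dw}{2\pi i}\Big]_{i,j=1}^N.$$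
   Context: The circle $|w|=R$ is oriented counterclockwise. In the nested sum, $y_{n+1}$ is summed from $y_{n+2}$ (read as $y_{N+1}=0$ when $n+1=N$... more precisely, the summation range of $y_j$ for $j>n$ starts at $y_{j+1}$ with the convention that the sum over $y_N$ starts at $0$) and for $j<n$ the sum over $y_j$ starts at $y_{j+1}$, where $y_n=y$ is fixed; the upper limit for $y_j$ is $x+y-x_j$. $\mathbf 1_{j\ne n}$ is $1$ if $j\ne n$ and $0$ otherwise. *)

theory Defs
  imports "HOL-Complex_Analysis.Complex_Analysis" "Jordan_Normal_Form.Determinant"
begin

definition circ_int :: "real \<Rightarrow> (complex \<Rightarrow> complex) \<Rightarrow> complex" where
  "circ_int R f = contour_integral (circlepath 0 R) f / (2 * of_real pi * \<i>)"

text \<open>Index set of the nested sum: tuples (y_1,...,y_N) (stored as functions on nat,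
  zero outside 1..N, so that y_(N+1) = 0) with y_n = y and, for every j in 1..N with
  j different from n, y_(j+1) <= y_j <= x + y - x_j.\<close>
definition sum_range :: "nat \<Rightarrow> nat \<Rightarrow> (nat \<Rightarrow> int) \<Rightarrow> int \<Rightarrow> int \<Rightarrow> (nat \<Rightarrow> int) set" where
  "sum_range N n xs x y = {ys. ys n = y \<and> (\<forall>j. j \<notin> {1..N} \<longrightarrow> ys j = 0) \<and>
      (\<forall>j\<in>{1..N} - {n}. ys (Suc j) \<le> ys j \<and> ys j \<le> x + y - xs j)}"

end

theory Submission
  imports Defs
begin


lemma F_cont:
  assumes "R > 0" "F analytic_on {w. R \<le> cmod w}" "R \<le> r"
  shows "continuous_on (sphere 0 r) F"
proof -
  have "F holomorphic_on {w. R \<le> cmod w}" using assms(2) analytic_imp_holomorphic by blast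
  hence "continuous_on {w. R \<le> cmod w} F" using holomorphic_on_imp_continuous_on by blast
  moreover have "sphere 0 r \<subseteq> {w. R \<le> cmod w}" using assms(3) by auto
  ultimately show ?thesis using continuous_on_subset by blast
qed

lemma integrable_term:
  assumes "R > 0" "F analytic_on {w. R \<le> cmod w}" "R \<le> r" "0 \<le> a"
  shows "(\<lambda>w. (w + 1) powi a * w powi k * F w) contour_integrable_on circlepath 0 r"
proof (rule contour_integrable_continuous_circlepath)
  have c: "continuous_on (sphere 0 r) F" using F_cont assms by blast
  have nz: "\<forall>x\<in>sphere 0 r. x \<noteq> (0::complex)" using assms by auto
  have "continuous_on (sphere 0 r) (\<lambda>w. (w + 1) powi a * w powi k * F w)"
    apply (intro continuous_on_mult continuous_on_power_int c)
    using nz assms(4) by (auto intro: continuous_on_add continuous_on_id continuous_on_const)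
  thus "continuous_on (path_image (circlepath 0 r)) (\<lambda>w. (w + 1) powi a * w powi k * F w)"
    using assms by simp
qed

lemma circ_indep:
  assumes "R > 0" "F analytic_on {w. R \<le> cmod w}" "R \<le> r"
  shows "contour_integral (circlepath 0 R) (\<lambda>w. w powi k * F w) = contour_integral (circlepath 0 r) (\<lambda>w. w powi k * F w)"
proof -
  obtain T where T: "open T" "{w. R \<le> cmod w} \<subseteq> T" "F holomorphic_on T"
    using assms(2) analytic_on_holomorphic by blast
  define S where "S = T - {0}"
  have oS: "open S" using T(1) S_def by auto
  have hF: "F holomorphic_on S" using T(3) unfolding S_def by (rule holomorphic_on_subset) blast
  have hS: "(\<lambda>w. w powi k * F w) holomorphic_on S"
    apply (intro holomorphic_on_mult holomorphic_on_power_int hF holomorphic_on_id)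
    unfolding S_def by (auto simp: holomorphic_on_id)
  have seg: "closed_segment (circlepath 0 R t) (circlepath 0 r t) \<subseteq> S" if "t \<in> {0..1}" for t
  proof
    fix z assume "z \<in> closed_segment (circlepath 0 R t) (circlepath 0 r t)"
    then obtain u where u: "0 \<le> u" "u \<le> 1" and z: "z = (1 - u) *\<^sub>R circlepath 0 R t + u *\<^sub>R circlepath 0 r t"
      unfolding closed_segment_def by auto
    define e where "e = exp (2 * of_real pi * \<i> * of_real t)"
    have ne: "cmod e = 1" unfolding e_def by (simp add: norm_exp_eq_Re)
    have cp: "circlepath 0 q t = of_real q * e" for q
      unfolding circlepath_def part_circlepath_def e_def linepath_def
      by (simp add: scaleR_conv_of_real algebra_simps)
    have "z = of_real ((1-u)*R + u*r) * e"
      unfolding z cp by (simp add: scaleR_conv_of_real algebra_simps)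
    hence "cmod z = \<bar>(1-u)*R + u*r\<bar>" using ne by (simp only: norm_mult norm_of_real) simp
    moreover have "(1-u)*R + u*r \<ge> R"
    proof -
      have "u*R \<le> u*r" using u assms by (intro mult_left_mono) auto
      thus ?thesis by (simp add: algebra_simps)
    qed
    ultimately have "R \<le> cmod z" using assms by simp
    thus "z \<in> S" using T(2) assms(1) unfolding S_def by auto
  qed
  have "homotopic_loops S (circlepath 0 R) (circlepath 0 r)"
    by (rule homotopic_loops_linear) (use seg in auto)
  thus ?thesis using Cauchy_theorem_homotopic_loops[OF _ oS hS] by simp
qed

lemma circ_zero:
  assumes "R > 0" "F analytic_on {w. R \<le> cmod w}" "(F \<longlongrightarrow> 0) at_infinity" "k \<le> -1"
  shows "circ_int R (\<lambda>w. w powi k * F w) = 0"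
proof -
  define I0 where "I0 = contour_integral (circlepath 0 R) (\<lambda>w. w powi k * F w)"
  have bnd: "norm I0 \<le> 2 * pi * e" if e: "e > 0" for e
  proof -
    have "eventually (\<lambda>w. dist (F w) 0 < e) at_infinity"
      using assms(3) e by (simp add: tendsto_iff)
    then obtain b where b: "\<And>w. b \<le> norm w \<Longrightarrow> dist (F w) 0 < e"
      unfolding eventually_at_infinity by blast
    define r where "r = max (max R 1) b"
    have r: "R \<le> r" "1 \<le> r" "b \<le> r" "r > 0" unfolding r_def by auto
    have eq: "I0 = contour_integral (circlepath 0 r) (\<lambda>w. w powi k * F w)"
      unfolding I0_def using circ_indep[OF assms(1,2) r(1)] .
    have "(\<lambda>w. (w + 1) powi 0 * w powi k * F w) contour_integrable_on circlepath 0 r"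
      by (rule integrable_term[OF assms(1,2) r(1)]) simp
    hence "(\<lambda>w. w powi k * F w) contour_integrable_on circlepath 0 r" by simp
    hence hi: "((\<lambda>w. w powi k * F w) has_contour_integral I0) (circlepath 0 r)"
      unfolding eq by (rule has_contour_integral_integral)
    have "norm I0 \<le> (e / r) * (2 * pi * r)"
    proof (rule has_contour_integral_bound_circlepath[OF hi])
      show "0 \<le> e / r" using e r by simp
      show "0 < r" using r by simp
      fix x :: complex assume "norm (x - 0) = r"
      hence nx: "norm x = r" by simp
      have "norm (x powi k * F x) = r powi k * norm (F x)"
        by (simp add: norm_mult norm_power_int nx)
      also have "\<dots> \<le> r powi (-1) * e"
      proof (rule mult_mono)
        show "r powi k \<le> r powi (-1)" by (rule power_int_increasing) (use assms(4) r in auto)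
        show "norm (F x) \<le> e" using b[of x] nx r by (simp add: dist_norm less_imp_le)
      qed (use r in auto)
      also have "\<dots> = e / r" by (simp add: power_int_minus field_simps)
      finally show "norm (x powi k * F x) \<le> e / r" .
    qed
    also have "\<dots> = 2 * pi * e" using r by (simp add: field_simps)
    finally show ?thesis .
  qed
  have "I0 = 0"
  proof (rule ccontr)
    assume "I0 \<noteq> 0"
    hence p: "norm I0 > 0" by simp
    have "norm I0 \<le> 2 * pi * (norm I0 / (4 * pi))" using bnd[of "norm I0 / (4 * pi)"] p by simp
    also have "\<dots> = norm I0 / 2" by simp
    finally show False using p by simp
  qed
  thus ?thesis unfolding circ_int_def I0_def by simp
qed

lemma geom_pow:
  fixes w :: complex
  assumes "0 \<le> b"
  shows "w * (\<Sum>a\<in>{b..b + int d - 1}. (w + 1) powi a) = (w + 1) powi (b + int d) - (w + 1) powi b"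
proof (induction d)
  case 0
  then show ?case by simp
next
  case (Suc d)
  have s: "{b..b + int (Suc d) - 1} = insert (b + int d) {b..b + int d - 1}" by auto
  have p: "(w + 1) powi (b + int (Suc d)) = (w + 1) powi (b + int d) * (w + 1)"
  proof -
    have "(w + 1) powi (b + int (Suc d)) = (w + 1) powi ((b + int d) + 1)" by (simp add: algebra_simps)
    also have "\<dots> = (w + 1) powi (b + int d) * (w + 1) powi 1"
      by (rule power_int_add) (use assms in auto)
    finally show ?thesis by simp
  qed
  have "w * (\<Sum>a\<in>{b..b + int (Suc d) - 1}. (w + 1) powi a)
     = w * (w + 1) powi (b + int d) + w * (\<Sum>a\<in>{b..b + int d - 1}. (w + 1) powi a)"
    unfolding s by (simp add: distrib_left)
  also have "\<dots> = w * (w + 1) powi (b + int d) + ((w + 1) powi (b + int d) - (w + 1) powi b)"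
    using Suc.IH by simp
  also have "\<dots> = (w + 1) powi (b + int (Suc d)) - (w + 1) powi b"
    unfolding p by (simp add: algebra_simps)
  finally show ?case .
qed

lemma circ_geom:
  assumes "R > 0" "F analytic_on {w. R \<le> cmod w}" "0 \<le> b" "b \<le> c + 1"
  shows "(\<Sum>a\<in>{b..c}. circ_int R (\<lambda>w. (w + 1) powi a * w powi k * F w))
       = circ_int R (\<lambda>w. (w + 1) powi (c + 1) * w powi (k - 1) * F w)
         - circ_int R (\<lambda>w. (w + 1) powi b * w powi (k - 1) * F w)"
proof -
  have int: "(\<lambda>w. (w + 1) powi a * w powi k' * F w) contour_integrable_on circlepath 0 R" if "0 \<le> a" for a k'
    using integrable_term[OF assms(1,2) order_refl that] .
  have "(\<Sum>a\<in>{b..c}. circ_int R (\<lambda>w. (w + 1) powi a * w powi k * F w))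
      = contour_integral (circlepath 0 R) (\<lambda>w. \<Sum>a\<in>{b..c}. (w + 1) powi a * w powi k * F w) / (2 * of_real pi * \<i>)"
    unfolding circ_int_def sum_divide_distrib[symmetric]
    by (subst contour_integral_sum) (use int assms(3) in auto)
  also have "contour_integral (circlepath 0 R) (\<lambda>w. \<Sum>a\<in>{b..c}. (w + 1) powi a * w powi k * F w)
     = contour_integral (circlepath 0 R) (\<lambda>w. (w + 1) powi (c + 1) * w powi (k - 1) * F w - (w + 1) powi b * w powi (k - 1) * F w)"
  proof (rule contour_integral_eq)
    fix w assume "w \<in> path_image (circlepath 0 R)"
    hence w0: "w \<noteq> 0" using assms(1) by auto
    define d where "d = nat (c + 1 - b)"
    have cd: "c = b + int d - 1" unfolding d_def using assms(4) by simp
    have wk: "w powi k = w * w powi (k - 1)"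
      using w0 by (metis add.commute diff_add_cancel power_int_add_1' )
    have "(\<Sum>a\<in>{b..c}. (w + 1) powi a * w powi k * F w) = (w * (\<Sum>a\<in>{b..c}. (w + 1) powi a)) * w powi (k - 1) * F w"
      unfolding wk by (simp add: sum_distrib_left sum_distrib_right algebra_simps)
    also have "\<dots> = ((w + 1) powi (c + 1) - (w + 1) powi b) * w powi (k - 1) * F w"
      unfolding cd using geom_pow[OF assms(3), of w d] by simp
    finally show "(\<Sum>a\<in>{b..c}. (w + 1) powi a * w powi k * F w) = (w + 1) powi (c + 1) * w powi (k - 1) * F w - (w + 1) powi b * w powi (k - 1) * F w"
      by (simp add: algebra_simps)
  qed
  also have "\<dots> = contour_integral (circlepath 0 R) (\<lambda>w. (w + 1) powi (c + 1) * w powi (k - 1) * F w)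
                 - contour_integral (circlepath 0 R) (\<lambda>w. (w + 1) powi b * w powi (k - 1) * F w)"
    by (rule contour_integral_diff) (use int assms(3,4) in auto)
  finally show ?thesis unfolding circ_int_def by (simp add: diff_divide_distrib)
qed




definition colrep :: "nat \<Rightarrow> (nat \<Rightarrow> nat \<Rightarrow> complex) \<Rightarrow> nat \<Rightarrow> (nat \<Rightarrow> complex) \<Rightarrow> complex mat" where
  "colrep N h c f = mat N N (\<lambda>(i,j). if j = c then f i else h i j)"

lemma colrep_carrier: "colrep N h c f \<in> carrier_mat N N"
  unfolding colrep_def by simp

lemma colrep_cofactor:
  assumes "c < N"
  shows "cofactor (colrep N h c f) i c = cofactor (colrep N h c g) i c"
proof -
  have "mat_delete (colrep N h c f) i c = mat_delete (colrep N h c g) i c"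
    unfolding mat_delete_def colrep_def by (rule eq_matI) auto
  thus ?thesis unfolding cofactor_def by simp
qed

lemma colrep_det:
  assumes "c < N"
  shows "det (colrep N h c f) = (\<Sum>i<N. f i * cofactor (colrep N h c (\<lambda>_. 0)) i c)"
proof -
  have "det (colrep N h c f) = (\<Sum>i<N. colrep N h c f $$ (i,c) * cofactor (colrep N h c f) i c)"
    using laplace_expansion_column[OF colrep_carrier assms] .
  also have "\<dots> = (\<Sum>i<N. f i * cofactor (colrep N h c (\<lambda>_. 0)) i c)"
    using assms colrep_cofactor[OF assms, where g="\<lambda>_. 0"] by (intro sum.cong) (auto simp: colrep_def)
  finally show ?thesis .
qed

lemma colrep_sum:
  assumes "c < N"
  shows "det (colrep N h c (\<lambda>i. \<Sum>a\<in>S. f a i)) = (\<Sum>a\<in>S. det (colrep N h c (f a)))"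
  unfolding colrep_det[OF assms] by (simp add: sum_distrib_right sum.swap[of _ S])

lemma colrep_diff:
  assumes "c < N"
  shows "det (colrep N h c (\<lambda>i. u i - v i)) = det (colrep N h c u) - det (colrep N h c v)"
  unfolding colrep_det[OF assms] by (simp add: left_diff_distrib sum_subtractf)

lemma colrep_zero:
  assumes "c < N"
  shows "det (colrep N h c (\<lambda>_. 0)) = 0"
  unfolding colrep_det[OF assms] by simp

lemma colrep_ident:
  assumes "c < N" "d < N" "d \<noteq> c" "\<And>i. i < N \<Longrightarrow> v i = h i d"
  shows "det (colrep N h c v) = 0"
proof (rule det_identical_columns[OF colrep_carrier, of c d])
  show "col (colrep N h c v) c = col (colrep N h c v) d"
    using assms by (intro eq_vecI) (auto simp: colrep_def)
qed (use assms in auto)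




definition Tset :: "nat set \<Rightarrow> (nat \<Rightarrow> int) \<Rightarrow> (nat \<Rightarrow> int) \<Rightarrow> (nat \<Rightarrow> int) set" where
  "Tset I g U = {ys. (\<forall>j. j \<notin> I \<longrightarrow> ys j = g j) \<and> (\<forall>j\<in>I. ys (Suc j) \<le> ys j \<and> ys j \<le> U j)}"

lemma Tset_empty: "Tset {} g U = {g}"
  unfolding Tset_def by auto

lemma peel_image:
  assumes "m \<in> I" "\<And>j. j \<in> I \<Longrightarrow> m \<le> j"
  shows "Tset I g U = (\<lambda>(ys, a). ys(m := a)) ` (SIGMA ys:Tset (I - {m}) g U. {ys (Suc m)..U m})"
proof (intro equalityI subsetI)
  fix zs assume z: "zs \<in> Tset I g U"
  define ys where "ys = zs(m := g m)"
  have "ys \<in> Tset (I - {m}) g U"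
    using z assms unfolding Tset_def ys_def by (auto, metis Suc_n_not_le_n)
  moreover have "zs m \<in> {ys (Suc m)..U m}" using z assms(1) unfolding Tset_def ys_def by auto
  moreover have "zs = ys(m := zs m)" unfolding ys_def by simp
  ultimately show "zs \<in> (\<lambda>(ys, a). ys(m := a)) ` (SIGMA ys:Tset (I - {m}) g U. {ys (Suc m)..U m})"
    by (intro image_eqI[where x="(ys, zs m)"]) auto
next
  fix zs assume "zs \<in> (\<lambda>(ys, a). ys(m := a)) ` (SIGMA ys:Tset (I - {m}) g U. {ys (Suc m)..U m})"
  then obtain ys a where ys: "ys \<in> Tset (I - {m}) g U" and a: "a \<in> {ys (Suc m)..U m}" and zs: "zs = ys(m := a)"
    by auto
  show "zs \<in> Tset I g U"
    using ys a assms unfolding Tset_def zs by (auto, metis Suc_n_not_le_n)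
qed

lemma peel_inj:
  assumes "m \<in> I"
  shows "inj_on (\<lambda>(ys, a). ys(m := a)) (SIGMA ys:Tset (I - {m}) g U. {ys (Suc m)..U m})"
proof (rule inj_onI, clarsimp)
  fix ys a ys' a'
  assume "ys \<in> Tset (I - {m}) g U" "ys' \<in> Tset (I - {m}) g U" "ys(m := a) = ys'(m := a')"
  moreover hence "ys m = ys' m" unfolding Tset_def by auto
  ultimately show "ys = ys' \<and> a = a'"
    by (metis fun_upd_same fun_upd_triv fun_upd_upd)
qed

lemma Tset_fin_nonneg:
  assumes "finite I" "\<And>j. 0 \<le> g j"
  shows "finite (Tset I g U) \<and> (\<forall>ys\<in>Tset I g U. \<forall>j. 0 \<le> ys j)"
  using assms(1)
proof (induction "card I" arbitrary: I)
  case 0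
  hence "I = {}" by simp
  thus ?case using assms(2) by (simp add: Tset_empty)
next
  case (Suc k)
  hence ne: "I \<noteq> {}" by auto
  define m where "m = Min I"
  have m: "m \<in> I" "\<And>j. j \<in> I \<Longrightarrow> m \<le> j" using Suc.prems ne unfolding m_def by auto
  have IH: "finite (Tset (I - {m}) g U) \<and> (\<forall>ys\<in>Tset (I - {m}) g U. \<forall>j. 0 \<le> ys j)"
    using Suc m by (intro Suc.hyps) auto
  have eq: "Tset I g U = (\<lambda>(ys, a). ys(m := a)) ` (SIGMA ys:Tset (I - {m}) g U. {ys (Suc m)..U m})"
    using peel_image m by blast
  have "finite (Tset I g U)" unfolding eq using IH by auto
  moreover have "\<forall>ys\<in>Tset I g U. \<forall>j. 0 \<le> ys j"
  proof (intro ballI allI)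
    fix zs j assume "zs \<in> Tset I g U"
    then obtain ys a where ys: "ys \<in> Tset (I - {m}) g U" and a: "ys (Suc m) \<le> a" and zs: "zs = ys(m := a)"
      unfolding eq by auto
    show "0 \<le> zs j" using IH ys a unfolding zs by (cases "j = m") (auto, meson order_trans)
  qed
  ultimately show ?case by blast
qed

lemma peel_sum:
  assumes "finite I" "\<And>j. 0 \<le> g j" "m \<in> I" "\<And>j. j \<in> I \<Longrightarrow> m \<le> j"
  shows "(\<Sum>zs\<in>Tset I g U. G zs) = (\<Sum>ys\<in>Tset (I - {m}) g U. \<Sum>a\<in>{ys (Suc m)..U m}. G (ys(m := a)))"
proof -
  have fin: "finite (Tset (I - {m}) g U)" using Tset_fin_nonneg assms(1,2) by blast
  have e: "Tset I g U = (\<lambda>(ys, a). ys(m := a)) ` (SIGMA ys:Tset (I - {m}) g U. {ys (Suc m)..U m})"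
    by (rule peel_image) (use assms in auto)
  have r: "sum G ((\<lambda>(ys, a). ys(m := a)) ` (SIGMA ys:Tset (I - {m}) g U. {ys (Suc m)..U m}))
     = sum (G \<circ> (\<lambda>(ys, a). ys(m := a))) (SIGMA ys:Tset (I - {m}) g U. {ys (Suc m)..U m})"
    by (rule sum.reindex) (rule peel_inj, rule assms(3))
  have "(\<Sum>zs\<in>Tset I g U. G zs) = (\<Sum>p\<in>(SIGMA ys:Tset (I - {m}) g U. {ys (Suc m)..U m}). G ((\<lambda>(ys, a). ys(m := a)) p))"
    unfolding e r by (simp add: comp_def)
  also have "\<dots> = (\<Sum>ys\<in>Tset (I - {m}) g U. \<Sum>a\<in>{ys (Suc m)..U m}. G (ys(m := a)))"
    using fin by (subst sum.Sigma) (auto intro!: sum.cong simp: case_prod_beta)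
  finally show ?thesis .
qed




definition Eent :: "real \<Rightarrow> (complex \<Rightarrow> complex) \<Rightarrow> nat \<Rightarrow> int \<Rightarrow> nat \<Rightarrow> complex" where
  "Eent R F j a i = circ_int R (\<lambda>w. (w + 1) powi a * w powi (int i - int j) * F w)"

definition Aent :: "real \<Rightarrow> (complex \<Rightarrow> complex) \<Rightarrow> (nat \<Rightarrow> int) \<Rightarrow> nat \<Rightarrow> nat \<Rightarrow> complex" where
  "Aent R F U j i = circ_int R (\<lambda>w. (w + 1) powi (U (Suc j) + 1) * w powi (int i - int j - 1) * F w)"

definition Mx :: "nat \<Rightarrow> real \<Rightarrow> (complex \<Rightarrow> complex) \<Rightarrow> (nat \<Rightarrow> int) \<Rightarrow> nat set \<Rightarrow> (nat \<Rightarrow> int) \<Rightarrow> complex mat" where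
  "Mx N R F U K ys = mat N N (\<lambda>(i, j). if Suc j \<in> K then Aent R F U j i else Eent R F j (ys (Suc j)) i)"

lemma inner_step:
  assumes R: "R > 0" and an: "F analytic_on {w. R \<le> cmod w}" and lim: "(F \<longlongrightarrow> 0) at_infinity"
    and m: "1 \<le> m" "m \<le> N" and K: "m \<notin> K" "Suc m \<notin> K"
    and b0: "0 \<le> ys (Suc m)" and b1: "ys (Suc m) \<le> U m + 1" and bN: "m = N \<Longrightarrow> ys (Suc m) = 0"
  shows "(\<Sum>a\<in>{ys (Suc m)..U m}. det (Mx N R F U K (ys(m := a)))) = det (Mx N R F U (insert m K) ys)"
proof -
  define c where "c = m - 1"
  have c: "Suc c = m" "c < N" using m unfolding c_def by auto
  define h where "h = (\<lambda>i j. if Suc j \<in> K then Aent R F U j i else Eent R F j (ys (Suc j)) i)"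
  define b where "b = ys (Suc m)"
  define D where "D = (\<lambda>i. circ_int R (\<lambda>w. (w + 1) powi b * w powi (int i - int c - 1) * F w))"
  have M1: "Mx N R F U K (ys(m := a)) = colrep N h c (Eent R F c a)" for a
    unfolding Mx_def colrep_def h_def by (rule eq_matI) (use c K in auto)
  have M2: "Mx N R F U (insert m K) ys = colrep N h c (Aent R F U c)"
    unfolding Mx_def colrep_def h_def by (rule eq_matI) (use c K in auto)
  have S: "(\<Sum>a\<in>{b..U m}. Eent R F c a i) = Aent R F U c i - D i" for i
    unfolding Eent_def Aent_def D_def c(1)
    using circ_geom[OF R an b0[folded b_def] b1[folded b_def], of "int i - int c"] by simp
  have "(\<Sum>a\<in>{ys (Suc m)..U m}. det (Mx N R F U K (ys(m := a))))
      = det (colrep N h c (\<lambda>i. \<Sum>a\<in>{b..U m}. Eent R F c a i))"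
    unfolding M1 b_def by (rule colrep_sum[OF c(2), symmetric])
  also have "\<dots> = det (colrep N h c (\<lambda>i. Aent R F U c i - D i))" unfolding S ..
  also have "\<dots> = det (colrep N h c (Aent R F U c)) - det (colrep N h c D)"
    by (rule colrep_diff[OF c(2)])
  also have "det (colrep N h c D) = 0"
  proof (cases "m = N")
    case True
    have "D i = 0" if "i < N" for i
    proof -
      have "D i = circ_int R (\<lambda>w. w powi (int i - int c - 1) * F w)"
        unfolding D_def b_def using bN True by simp
      also have "\<dots> = 0" by (rule circ_zero[OF R an lim]) (use that c True in auto)
      finally show ?thesis .
    qed
    thus ?thesis unfolding colrep_det[OF c(2)] by simp
  next
    case False
    hence mN: "m < N" using m by simp
    show ?thesis
    proof (rule colrep_ident[OF c(2) mN])
      show "m \<noteq> c" using c by simp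
      fix i assume "i < N"
      have im: "int i - int c - 1 = int i - int m" using c(1) by auto
      show "D i = h i m" unfolding h_def D_def Eent_def b_def im using K by simp
    qed
  qed
  finally show ?thesis unfolding M2 by (simp only: diff_zero)
qed

lemma invariant:
  fixes g U :: "nat \<Rightarrow> int" and I S0 :: "nat set"
  assumes R: "R > 0" and an: "F analytic_on {w. R \<le> cmod w}" and lim: "(F \<longlongrightarrow> 0) at_infinity"
    and S0: "S0 \<subseteq> {1..N}"
    and g0: "\<And>j. 0 \<le> g j" and gN: "g (Suc N) = 0"
    and HU1: "\<And>m. m \<in> S0 \<Longrightarrow> Suc m \<in> S0 \<Longrightarrow> U (Suc m) \<le> U m"
    and HU2: "\<And>m. m \<in> S0 \<Longrightarrow> Suc m \<notin> S0 \<Longrightarrow> g (Suc m) \<le> U m"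
  shows "I \<subseteq> S0 \<Longrightarrow> (\<forall>j\<in>I. Suc j \<in> I \<or> Suc j \<notin> S0) \<Longrightarrow>
     (\<Sum>ys\<in>Tset I g U. det (Mx N R F U (S0 - I) ys)) = det (Mx N R F U S0 g)"
proof (induction "card I" arbitrary: I)
  case 0
  have "finite I" using "0.prems"(1) S0 by (meson finite_atLeastAtMost finite_subset order_trans)
  hence "I = {}" using "0.hyps" by simp
  thus ?case by (simp add: Tset_empty)
next
  case (Suc k)
  have fI: "finite I" using Suc.prems(1) S0 by (meson finite_atLeastAtMost finite_subset order_trans)
  hence ne: "I \<noteq> {}" using Suc.hyps(2) by auto
  define m where "m = Min I"
  have mI: "m \<in> I" "\<And>j. j \<in> I \<Longrightarrow> m \<le> j" using fI ne unfolding m_def by auto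
  define I' where "I' = I - {m}"
  have fI': "finite I'" using fI I'_def by simp
  have mS: "m \<in> S0" "1 \<le> m" "m \<le> N" using mI Suc.prems(1) S0 by auto
  have IH: "(\<Sum>ys\<in>Tset I' g U. det (Mx N R F U (S0 - I') ys)) = det (Mx N R F U S0 g)"
  proof (rule Suc.hyps(1))
    show "k = card I'" using Suc.hyps(2) fI mI unfolding I'_def by simp
    show "I' \<subseteq> S0" using Suc.prems(1) unfolding I'_def by auto
    show "\<forall>j\<in>I'. Suc j \<in> I' \<or> Suc j \<notin> S0"
    proof
      fix j assume j: "j \<in> I'"
      hence "j \<in> I" "m \<le> j" using mI unfolding I'_def by auto
      hence "Suc j \<in> I \<or> Suc j \<notin> S0" using Suc.prems(2) by blast
      moreover have "Suc j \<noteq> m" using \<open>m \<le> j\<close> by simp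
      ultimately show "Suc j \<in> I' \<or> Suc j \<notin> S0" unfolding I'_def by blast
    qed
  qed
  have step: "(\<Sum>a\<in>{ys (Suc m)..U m}. det (Mx N R F U (S0 - I) (ys(m := a)))) = det (Mx N R F U (S0 - I') ys)"
    if ys: "ys \<in> Tset I' g U" for ys
  proof -
    have e: "insert m (S0 - I) = S0 - I'" using mS mI unfolding I'_def by auto
    have nn: "0 \<le> ys (Suc m)" using Tset_fin_nonneg[of I' g U, OF fI' g0] ys by blast
    have b1: "ys (Suc m) \<le> U m + 1"
    proof (cases "Suc m \<in> I'")
      case True
      hence "ys (Suc m) \<le> U (Suc m)" using ys unfolding Tset_def by auto
      moreover have "Suc m \<in> S0" using True Suc.prems(1) unfolding I'_def by auto
      ultimately show ?thesis using HU1[OF mS(1)] by simp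
    next
      case False
      hence "Suc m \<notin> I" unfolding I'_def by auto
      hence "Suc m \<notin> S0" using Suc.prems(2) mI by auto
      moreover have "ys (Suc m) = g (Suc m)" using False ys unfolding Tset_def by auto
      ultimately show ?thesis using HU2[OF mS(1)] by simp
    qed
    have bN: "ys (Suc m) = 0" if "m = N"
    proof -
      have "Suc m \<notin> I'" using that Suc.prems(1) S0 unfolding I'_def by auto
      thus ?thesis using ys gN that unfolding Tset_def by auto
    qed
    have K2: "Suc m \<notin> S0 - I" using Suc.prems(2) mI by auto
    show ?thesis
      using inner_step[OF R an lim mS(2,3), of "S0 - I" ys U, OF _ K2 nn b1 bN] mI(1) unfolding e by blast
  qed
  have "(\<Sum>ys\<in>Tset I g U. det (Mx N R F U (S0 - I) ys))
     = (\<Sum>ys\<in>Tset I' g U. \<Sum>a\<in>{ys (Suc m)..U m}. det (Mx N R F U (S0 - I) (ys(m := a))))"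
    unfolding I'_def by (rule peel_sum[OF fI g0 mI])
  also have "\<dots> = (\<Sum>ys\<in>Tset I' g U. det (Mx N R F U (S0 - I') ys))"
    by (rule sum.cong[OF refl]) (rule step)
  finally show ?case using IH by simp
qed

lemma xs_mono:
  fixes xs :: "nat \<Rightarrow> int"
  assumes "\<And>j. 1 \<le> j \<Longrightarrow> j < N \<Longrightarrow> xs j \<le> xs (Suc j)" "1 \<le> n"
  shows "n + k \<le> N \<Longrightarrow> xs n \<le> xs (n + k)"
proof (induction k)
  case 0 then show ?case by simp
next
  case (Suc k)
  hence "xs n \<le> xs (n + k)" by simp
  also have "xs (n + k) \<le> xs (Suc (n + k))" using assms Suc.prems by simp
  finally show ?case by simp
qed

theorem mainTheorem9:
  fixes N n :: nat and x y :: int and xs :: "nat \<Rightarrow> int" and R :: real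
    and F :: "complex \<Rightarrow> complex"
  assumes "N \<ge> 1" and "1 \<le> n" and "n \<le> N"
    and "0 \<le> xs 1" and "\<And>j. 1 \<le> j \<Longrightarrow> j < N \<Longrightarrow> xs j \<le> xs (Suc j)"
    and "xs N \<le> x + y" and "xs n = x"
    and "R > 0" and "F analytic_on {w. R \<le> cmod w}"
    and "(F \<longlongrightarrow> 0) at_infinity"
  shows "(\<Sum>ys\<in>sum_range N n xs x y.
            det (mat N N (\<lambda>(i, j). circ_int R (\<lambda>w. (w + 1) powi (ys (Suc j)) *
                 w powi (int i - int j) * F w))))
       = det (mat N N (\<lambda>(i, j). circ_int R (\<lambda>w.
                 (w + 1) powi (x + y - xs (Suc j) + (if Suc j \<noteq> n then 1 else 0)) *
                 w powi (int i - int j - (if Suc j \<noteq> n then 1 else 0)) * F w)))"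
proof -
  define g where "g = (\<lambda>j. if j = n then y else (0::int))"
  define U where "U = (\<lambda>j. x + y - xs j)"
  define S0 where "S0 = {1..N} - {n}"
  have "xs n \<le> xs (n + (N - n))" by (rule xs_mono[of N xs n, OF assms(5,2)]) (use assms(3) in simp_all)
  hence xnN: "xs n \<le> xs N" using assms(3) by simp
  have y0: "0 \<le> y" using xnN assms(6,7) by simp
  have g0: "\<And>j. 0 \<le> g j" unfolding g_def using y0 by simp
  have gN: "g (Suc N) = 0" unfolding g_def using assms(3) by simp
  have S0sub: "S0 \<subseteq> {1..N}" unfolding S0_def by auto
  have HU1: "U (Suc m) \<le> U m" if "m \<in> S0" "Suc m \<in> S0" for m
    using that assms(5)[of m] unfolding U_def S0_def by auto
  have HU2: "g (Suc m) \<le> U m" if "m \<in> S0" "Suc m \<notin> S0" for m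
  proof (cases "Suc m = n")
    case True
    hence "xs m \<le> xs (Suc m)" using that assms(5)[of m] assms(3) unfolding S0_def by auto
    thus ?thesis using True assms(7) unfolding g_def U_def by simp
  next
    case False
    hence "m = N" using that unfolding S0_def by auto
    thus ?thesis using gN assms(6) unfolding U_def by simp
  qed
  have inv: "(\<Sum>ys\<in>Tset S0 g U. det (Mx N R F U (S0 - S0) ys)) = det (Mx N R F U S0 g)"
    by (rule invariant[OF assms(8,9,10) S0sub g0 gN HU1 HU2]) auto
  have rng: "sum_range N n xs x y = Tset S0 g U"
    unfolding sum_range_def Tset_def S0_def g_def U_def using assms(2,3)
    by (auto; metis atLeastAtMost_iff)
  have L: "mat N N (\<lambda>(i, j). circ_int R (\<lambda>w. (w + 1) powi (ys (Suc j)) * w powi (int i - int j) * F w))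
        = Mx N R F U (S0 - S0) ys" for ys
    unfolding Mx_def Eent_def by simp
  have Rt: "mat N N (\<lambda>(i, j). circ_int R (\<lambda>w.
                 (w + 1) powi (x + y - xs (Suc j) + (if Suc j \<noteq> n then 1 else 0)) *
                 w powi (int i - int j - (if Suc j \<noteq> n then 1 else 0)) * F w))
        = Mx N R F U S0 g"
    unfolding Mx_def
  proof (rule eq_matI)
    fix i j assume ij: "i < dim_row (mat N N (\<lambda>(i, j). if Suc j \<in> S0 then Aent R F U j i else Eent R F j (g (Suc j)) i))"
      "j < dim_col (mat N N (\<lambda>(i, j). if Suc j \<in> S0 then Aent R F U j i else Eent R F j (g (Suc j)) i))"
    hence ij': "i < N" "j < N" by auto
    show "mat N N (\<lambda>(i, j). circ_int R (\<lambda>w.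
                 (w + 1) powi (x + y - xs (Suc j) + (if Suc j \<noteq> n then 1 else 0)) *
                 w powi (int i - int j - (if Suc j \<noteq> n then 1 else 0)) * F w)) $$ (i, j)
        = mat N N (\<lambda>(i, j). if Suc j \<in> S0 then Aent R F U j i else Eent R F j (g (Suc j)) i) $$ (i, j)"
      using ij' assms(7) unfolding S0_def Aent_def Eent_def U_def g_def by auto
  qed auto
  show ?thesis unfolding rng L Rt using inv by simp
qed


end
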